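(* Let $\Delta$ be a pure $d$-dimensional APC simplicial complex, $0\le i<d$, let $\Upsilon$ be an $i$-dimensional spanning tree of $\Delta$ with $\tilde H_{i-1}(\Upsilon;\mathbb{Z})=0$, let $\Theta=\Delta_i\setminus\Upsilon_i$, let $L=L_{\Delta,i}$, and let $\tilde L$ be the submatrix of $L$ with rows and columns indexed by $\Theta$, with entries $\ell_{\theta\sigma}$ defined by $\tilde L\theta=\sum_{\sigma\in\Theta}\ell_{\theta\sigma}\sigma$ for $\theta\in\Theta$. Let $\hat\theta$ ($\theta\in\Theta$) be as follows: choose integers $c_{\sigma\theta}$ ($\sigma\in\Upsilon_i$) with $\partial_{\Delta,i}(\theta)=\sum_{\sigma\in\Upsilon_i}c_{\sigma\theta}\partial_{\Delta,i}(\sigma)$ and set $\hat\theta=\theta-\sum_{\sigma\in\Upsilon_i}c_{\sigma\theta}\sigma$. Then for every $\theta\in\Theta$, $$L\theta=\sum_{\sigma\in\Theta}\ell_{\sigma\theta}\,\hat\sigma.$$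
   Context: For a finite simplicial complex $\Delta$, $\Delta_i$ is its set of $i$-faces, $\Delta_{(i)}$ its $i$-skeleton, $f_i=|\Delta_i|$. $C_i(\Delta;\mathbb{Z})$ is free abelian on the (fixed-orientation) $i$-faces, $\partial_{\Delta,i}$ the simplicial boundary map, $\partial^*_{\Delta,i}$ its transpose, and $L_{\Delta,i}=\partial_{i+1}\partial^*_{i+1}$. $\tilde H$ is reduced homology, $\beta_i=\dim_\mathbb{Q}\tilde H_i(\cdot;\mathbb{Q})$. A pure $d$-dimensional complex is APC if $\tilde H_j(\Delta;\mathbb{Q})=0$ for all $j<d$. For a pure $k$-dimensional complex $\Gamma$, a subcomplex $\Upsilon$ with $\Upsilon_{(k-1)}=\Gamma_{(k-1)}$ is a spanning tree if $\tilde H_k(\Upsilon;\mathbb{Z})=0$, $\tilde H_{k-1}(\Upsilon;\mathbb{Q})=0$, and $f_k(\Upsilon)=f_k(\Gamma)-\beta_k(\Gamma)+\beta_{k-1}(\Gamma)$; an $i$-dimensional spanning tree of $\Delta$ is a spanning tree of $\Delta_{(i)}$. (The existence of the integers $c_{\sigma\theta}$ is guaranteed since $\operatorname{im}\partial_{\Delta,i}=\operatorname{im}\partial_{\Upsilon,i}$ under these hypotheses.) *)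

theory Defs
  imports Complex_Main "HOL-Library.Function_Algebras"
begin

text \<open>Vertices carry a linear order; a simplex is a finite set of vertices,
oriented by the increasing order of its vertices.  A simplicial complex contains the empty
face, which serves as the unique (-1)-face, so the chain complex below is the augmented one
and its homology is reduced homology.  Faces are indexed by their cardinality:
cfaces X n is the set of (n-1)-dimensional faces.\<close>

definition simplicial_complex :: "'v set set \<Rightarrow> bool" where
  "simplicial_complex X \<longleftrightarrow> finite X \<and> X \<noteq> {} \<and> (\<forall>\<sigma>\<in>X. finite \<sigma>) \<and>
     (\<forall>\<sigma>\<in>X. \<forall>\<tau>. \<tau> \<subseteq> \<sigma> \<longrightarrow> \<tau> \<in> X)"

definition cfaces :: "'v set set \<Rightarrow> nat \<Rightarrow> 'v set set" where
  "cfaces X n = {\<sigma>\<in>X. card \<sigma> = n}"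

definition skel :: "'v set set \<Rightarrow> nat \<Rightarrow> 'v set set" where
  "skel X i = {\<sigma>\<in>X. card \<sigma> \<le> i + 1}"

definition pure :: "'v set set \<Rightarrow> nat \<Rightarrow> bool" where
  "pure X d \<longleftrightarrow> (\<forall>\<sigma>\<in>X. card \<sigma> \<le> d + 1) \<and> (\<forall>\<sigma>\<in>X. \<exists>\<tau>\<in>X. \<sigma> \<subseteq> \<tau> \<and> card \<tau> = d + 1)"

text \<open>incidence number [sigma : tau] for the ordered orientation:
  d[v_0,...,v_k] = sum_j (-1)^j [v_0,...,omit v_j,...,v_k]\<close>
definition incid :: "'v::linorder set \<Rightarrow> 'v set \<Rightarrow> 'a::comm_ring_1" where
  "incid \<sigma> \<tau> = (if \<tau> \<subseteq> \<sigma> \<and> card (\<sigma> - \<tau>) = 1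
      then (- 1) ^ card {w\<in>\<sigma>. w < the_elem (\<sigma> - \<tau>)} else 0)"

definition chains :: "'a itself \<Rightarrow> 'v set set \<Rightarrow> nat \<Rightarrow> ('v set \<Rightarrow> 'a::zero) set" where
  "chains R X n = {c. \<forall>\<sigma>. c \<sigma> \<noteq> 0 \<longrightarrow> \<sigma> \<in> cfaces X n}"

definition elem :: "'v set \<Rightarrow> 'v set \<Rightarrow> 'a::{zero,one}" where
  "elem \<theta> = (\<lambda>\<tau>. if \<tau> = \<theta> then 1 else 0)"

definition csmult :: "'a::times \<Rightarrow> ('v set \<Rightarrow> 'a) \<Rightarrow> 'v set \<Rightarrow> 'a" where
  "csmult r c = (\<lambda>\<tau>. r * c \<tau>)"

definition bdry :: "'v::linorder set set \<Rightarrow> nat \<Rightarrow> ('v set \<Rightarrow> 'a::comm_ring_1) \<Rightarrow> 'v set \<Rightarrow> 'a" where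
  "bdry X n c = (\<lambda>\<tau>. if \<tau> \<in> cfaces X n then (\<Sum>\<sigma>\<in>cfaces X (Suc n). c \<sigma> * incid \<sigma> \<tau>) else 0)"

definition cobdry :: "'v::linorder set set \<Rightarrow> nat \<Rightarrow> ('v set \<Rightarrow> 'a::comm_ring_1) \<Rightarrow> 'v set \<Rightarrow> 'a" where
  "cobdry X n c = (\<lambda>\<rho>. if \<rho> \<in> cfaces X (Suc n) then (\<Sum>\<tau>\<in>cfaces X n. incid \<rho> \<tau> * c \<tau>) else 0)"

definition laplace :: "'v::linorder set set \<Rightarrow> nat \<Rightarrow> ('v set \<Rightarrow> 'a::comm_ring_1) \<Rightarrow> 'v set \<Rightarrow> 'a" where
  "laplace X i c = bdry X (Suc i) (cobdry X (Suc i) c)"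

definition cycles :: "'a itself \<Rightarrow> 'v::linorder set set \<Rightarrow> nat \<Rightarrow> ('v set \<Rightarrow> 'a::comm_ring_1) set" where
  "cycles R X n = {c \<in> chains R X n. n = 0 \<or> bdry X (n - 1) c = 0}"

definition bnds :: "'a itself \<Rightarrow> 'v::linorder set set \<Rightarrow> nat \<Rightarrow> ('v set \<Rightarrow> 'a::comm_ring_1) set" where
  "bnds R X n = bdry X n ` chains R X (Suc n)"

text \<open>reduced homology with coefficients 'a in dimension n-1 vanishes\<close>
definition hvan :: "'a::comm_ring_1 itself \<Rightarrow> 'v::linorder set set \<Rightarrow> nat \<Rightarrow> bool" where
  "hvan R X n \<longleftrightarrow> cycles R X n \<subseteq> bnds R X n"

definition betti :: "'v::linorder set set \<Rightarrow> nat \<Rightarrow> int" where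
  "betti X n = int (vector_space.dim (\<lambda>(r::rat) f x. r * f x) (cycles TYPE(rat) X n))
             - int (vector_space.dim (\<lambda>(r::rat) f x. r * f x) (bnds TYPE(rat) X n))"

text \<open>APC: reduced rational homology vanishes in all dimensions j < d (j = -1,...,d-1)\<close>
definition APC :: "'v::linorder set set \<Rightarrow> nat \<Rightarrow> bool" where
  "APC X d \<longleftrightarrow> pure X d \<and> (\<forall>n\<le>d. hvan TYPE(rat) X n)"

definition spanning_tree :: "'v::linorder set set \<Rightarrow> nat \<Rightarrow> 'v set set \<Rightarrow> bool" where
  "spanning_tree G k U \<longleftrightarrow> pure G k \<and> simplicial_complex U \<and> U \<subseteq> G \<and>
     {\<sigma>\<in>U. card \<sigma> \<le> k} = {\<sigma>\<in>G. card \<sigma> \<le> k} \<and>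
     hvan TYPE(int) U (Suc k) \<and> hvan TYPE(rat) U k \<and>
     int (card (cfaces U (Suc k))) = int (card (cfaces G (Suc k))) - betti G (Suc k) + betti G k"

end

theory Submission
  imports Defs
begin

lemma sum_app: "(sum f A :: 'b \<Rightarrow> 'c::comm_monoid_add) x = (\<Sum>a\<in>A. f a x)"
  by (induction A rule: infinite_finite_induct) auto

lemma elem_app: "(elem s :: 'v set \<Rightarrow> 'a::{zero,one}) t = (if t = s then 1 else 0)"
  by (simp add: elem_def)

lemma csmult_app: "csmult r c t = r * c t" by (simp add: csmult_def)

lemma card_less_count:
  fixes \<rho> :: "'v::linorder set"
  assumes "finite \<rho>" "a \<in> \<rho>" "a < b"
  shows "card {w\<in>\<rho> - {a}. w < b} + 1 = card {w\<in>\<rho>. w < b}"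
proof -
  have "{w\<in>\<rho>. w < b} = insert a {w\<in>\<rho> - {a}. w < b}" using assms by auto
  moreover have "finite {w\<in>\<rho> - {a}. w < b}" using assms by auto
  ultimately show ?thesis by simp
qed

lemma card_less_count2:
  fixes \<rho> :: "'v::linorder set"
  assumes "a < b"
  shows "{w\<in>\<rho> - {b}. w < a} = {w\<in>\<rho>. w < a}"
  using assms by auto

lemma incid_remove:
  assumes "finite \<rho>" "a \<in> \<rho>"
  shows "incid \<rho> (\<rho> - {a}) = ((- 1) ^ card {w\<in>\<rho>. w < a} :: 'a::comm_ring_1)"
proof -
  have "\<rho> - (\<rho> - {a}) = {a}" using assms by auto
  then show ?thesis by (simp add: incid_def)
qed

lemma incid_nz:
  assumes "incid \<sigma> \<tau> \<noteq> (0::'a::comm_ring_1)"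
  shows "\<tau> \<subseteq> \<sigma> \<and> (\<exists>x. \<sigma> - \<tau> = {x})"
  using assms unfolding incid_def by (auto split: if_splits simp: card_1_singleton_iff)

lemma dd_coef:
  fixes \<rho> \<tau> :: "'v::linorder set"
  assumes X: "simplicial_complex X" and r: "\<rho> \<in> X" "card \<rho> = Suc (Suc n)"
    and t: "card \<tau> = n"
  shows "(\<Sum>\<sigma>\<in>cfaces X (Suc n). incid \<rho> \<sigma> * incid \<sigma> \<tau>) = (0::'a::comm_ring_1)"
proof (cases "\<tau> \<subseteq> \<rho>")
  case False
  have "incid \<rho> \<sigma> * incid \<sigma> \<tau> = (0::'a)" for \<sigma>
  proof (rule ccontr)
    assume "incid \<rho> \<sigma> * incid \<sigma> \<tau> \<noteq> (0::'a)"
    then have "incid \<rho> \<sigma> \<noteq> (0::'a)" "incid \<sigma> \<tau> \<noteq> (0::'a)" by auto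
    then show False using incid_nz False by blast
  qed
  then show ?thesis by simp
next
  case True
  have fr: "finite \<rho>" using r by (metis card.infinite nat.distinct(1))
  have ft: "finite \<tau>" using True fr finite_subset by blast
  have c2: "card (\<rho> - \<tau>) = 2" using True fr ft r t by (simp add: card_Diff_subset)
  then obtain a b where ab: "\<rho> - \<tau> = {a, b}" "a \<noteq> b" by (auto simp: card_2_iff)
  then have ab2: "\<exists>a b. \<rho> - \<tau> = {a, b} \<and> a < b"
    by (metis insert_commute linorder_neqE)
  then obtain a b where ab: "\<rho> - \<tau> = {a, b}" "a < b" by blast
  have aR: "a \<in> \<rho>" "b \<in> \<rho>" "a \<notin> \<tau>" "b \<notin> \<tau>" using ab by auto
  define s1 where "s1 = \<rho> - {a}"
  define s2 where "s2 = \<rho> - {b}"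
  have s12: "s1 \<noteq> s2" using ab aR unfolding s1_def s2_def by auto
  have sX: "s1 \<in> cfaces X (Suc n)" "s2 \<in> cfaces X (Suc n)"
    using X r aR fr unfolding s1_def s2_def cfaces_def simplicial_complex_def by auto
  have zero: "incid \<rho> \<sigma> * incid \<sigma> \<tau> = (0::'a)" if "\<sigma> \<notin> {s1, s2}" for \<sigma>
  proof (rule ccontr)
    assume "incid \<rho> \<sigma> * incid \<sigma> \<tau> \<noteq> (0::'a)"
    then have "incid \<rho> \<sigma> \<noteq> (0::'a)" "incid \<sigma> \<tau> \<noteq> (0::'a)" by auto
    then obtain x where "\<sigma> \<subseteq> \<rho>" "\<rho> - \<sigma> = {x}" "\<tau> \<subseteq> \<sigma>" "\<sigma> - \<tau> \<noteq> {}"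
      using incid_nz by (metis insert_not_empty)
    then have "\<sigma> = \<rho> - {x}" "x \<in> {a, b}" using ab by auto
    then show False using that unfolding s1_def s2_def by auto
  qed
  have "(\<Sum>\<sigma>\<in>cfaces X (Suc n). incid \<rho> \<sigma> * incid \<sigma> \<tau>)
      = (\<Sum>\<sigma>\<in>{s1, s2}. incid \<rho> \<sigma> * incid \<sigma> (\<tau>::'v set) :: 'a)"
  proof (rule sum.mono_neutral_right)
    show "finite (cfaces X (Suc n))" using X unfolding simplicial_complex_def cfaces_def by auto
  qed (use sX zero in auto)
  also have "\<dots> = incid \<rho> s1 * incid s1 \<tau> + incid \<rho> s2 * incid s2 \<tau>" using s12 by simp
  also have "\<dots> = 0"
  proof -
    have t1: "\<tau> = s1 - {b}" "\<tau> = s2 - {a}" using ab True unfolding s1_def s2_def by auto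
    have f1: "finite s1" "finite s2" "b \<in> s1" "a \<in> s2" using fr aR ab unfolding s1_def s2_def by auto
    have i1: "incid \<rho> s1 = ((-1) ^ card {w\<in>\<rho>. w < a} :: 'a)" unfolding s1_def by (rule incid_remove[OF fr aR(1)])
    have i2: "incid \<rho> s2 = ((-1) ^ card {w\<in>\<rho>. w < b} :: 'a)" unfolding s2_def by (rule incid_remove[OF fr aR(2)])
    have i3: "incid s1 \<tau> = ((-1) ^ card {w\<in>s1. w < b} :: 'a)" unfolding t1(1) by (rule incid_remove[OF f1(1) f1(3)])
    have i4: "incid s2 \<tau> = ((-1) ^ card {w\<in>s2. w < a} :: 'a)" unfolding t1(2) by (rule incid_remove[OF f1(2) f1(4)])
    have e1: "card {w\<in>s1. w < b} + 1 = card {w\<in>\<rho>. w < b}" unfolding s1_def by (rule card_less_count[OF fr aR(1) ab(2)])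
    have e2: "{w\<in>s2. w < a} = {w\<in>\<rho>. w < a}" unfolding s2_def by (rule card_less_count2[OF ab(2)])
    show ?thesis unfolding i1 i2 i3 i4 e2 e1[symmetric] by (simp add: power_add)
  qed
  finally show ?thesis .
qed

lemma bdry_bdry:
  assumes X: "simplicial_complex X"
  shows "bdry X n (bdry X (Suc n) z) = (0 :: 'v::linorder set \<Rightarrow> 'a::comm_ring_1)"
proof
  fix \<tau>
  show "bdry X n (bdry X (Suc n) z) \<tau> = (0 :: 'v set \<Rightarrow> 'a) \<tau>"
  proof (cases "\<tau> \<in> cfaces X n")
    case False then show ?thesis by (simp add: bdry_def)
  next
    case True
    have "bdry X n (bdry X (Suc n) z) \<tau>
        = (\<Sum>\<sigma>\<in>cfaces X (Suc n). (\<Sum>\<rho>\<in>cfaces X (Suc (Suc n)). z \<rho> * incid \<rho> \<sigma>) * incid \<sigma> \<tau>)"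
      using True by (simp add: bdry_def)
    also have "\<dots> = (\<Sum>\<sigma>\<in>cfaces X (Suc n). \<Sum>\<rho>\<in>cfaces X (Suc (Suc n)). z \<rho> * (incid \<rho> \<sigma> * incid \<sigma> \<tau>))"
      by (simp add: sum_distrib_right mult.assoc)
    also have "\<dots> = (\<Sum>\<rho>\<in>cfaces X (Suc (Suc n)). z \<rho> * (\<Sum>\<sigma>\<in>cfaces X (Suc n). incid \<rho> \<sigma> * incid \<sigma> \<tau>))"
      by (subst sum.swap) (simp add: sum_distrib_left)
    also have "\<dots> = 0"
    proof (intro sum.neutral ballI)
      fix \<rho> assume "\<rho> \<in> cfaces X (Suc (Suc n))"
      then show "z \<rho> * (\<Sum>\<sigma>\<in>cfaces X (Suc n). incid \<rho> \<sigma> * incid \<sigma> \<tau>) = 0"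
      proof -
        have "(\<Sum>\<sigma>\<in>cfaces X (Suc n). incid \<rho> \<sigma> * incid \<sigma> \<tau>) = (0::'a)"
          using True \<open>\<rho> \<in> cfaces X (Suc (Suc n))\<close> by (intro dd_coef[OF X]) (auto simp: cfaces_def)
        then show ?thesis by simp
      qed
    qed
    finally show ?thesis by simp
  qed
qed

lemma bdry_sum:
  shows "bdry X n (\<Sum>a\<in>A. f a) = (\<Sum>a\<in>A. bdry X n (f a) :: 'v::linorder set \<Rightarrow> 'b::comm_ring_1)"
proof
  fix \<tau> show "bdry X n (\<Sum>a\<in>A. f a) \<tau> = (\<Sum>a\<in>A. bdry X n (f a)) \<tau>"
    by (auto simp: bdry_def sum_app sum_distrib_right intro: sum.swap)
qed

lemma bdry_diff:
  shows "bdry X n (f - g) = (bdry X n f - bdry X n g :: 'v::linorder set \<Rightarrow> 'b::comm_ring_1)"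
  by (auto simp: bdry_def fun_eq_iff sum_subtractf left_diff_distrib)

lemma bdry_smult:
  shows "bdry X n (csmult r f) = (csmult r (bdry X n f) :: 'v::linorder set \<Rightarrow> 'b::comm_ring_1)"
  by (auto simp: bdry_def fun_eq_iff csmult_def sum_distrib_left mult.assoc)

lemma sum_elem: assumes "finite A" shows "(\<Sum>\<tau>\<in>A. f \<tau> * (if \<tau> = s then 1 else 0)) = (if s \<in> A then f s else (0::'a::comm_ring_1))"
proof -
  have "(\<Sum>\<tau>\<in>A. f \<tau> * (if \<tau> = s then 1 else 0)) = (\<Sum>\<tau>\<in>A. if \<tau> = s then f \<tau> else 0)"
    by (rule sum.cong) auto
  then show ?thesis using assms by (simp add: sum.delta)
qed

lemma sum_elem2: assumes "finite A" shows "(\<Sum>\<tau>\<in>A. f \<tau> * (if s = \<tau> then 1 else 0)) = (if s \<in> A then f s else (0::'a::comm_ring_1))"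
  using sum_elem[OF assms, of f s] by (simp add: eq_commute)

lemma lap_app:
  assumes "finite (cfaces X (Suc i))" "\<sigma> \<in> cfaces X (Suc i)" "\<theta> \<in> cfaces X (Suc i)"
  shows "laplace X i (elem \<sigma>) \<theta> = (\<Sum>\<rho>\<in>cfaces X (Suc (Suc i)). incid \<rho> \<sigma> * incid \<rho> \<theta> :: 'a::comm_ring_1)"
  using assms by (simp add: laplace_def bdry_def cobdry_def elem_def sum_elem)

theorem claim6:
  fixes \<Delta> \<Upsilon> :: "'v::linorder set set" and d i :: nat
    and c :: "'v set \<Rightarrow> 'v set \<Rightarrow> int"
  assumes "simplicial_complex \<Delta>" and "APC \<Delta> d" and "i < d"
    and "spanning_tree (skel \<Delta> i) i \<Upsilon>"
    and "hvan TYPE(int) \<Upsilon> i"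
    and "\<forall>\<theta>\<in>cfaces \<Delta> (Suc i) - cfaces \<Upsilon> (Suc i).
           bdry \<Delta> i (elem \<theta> :: 'v set \<Rightarrow> int)
             = (\<Sum>\<sigma>\<in>cfaces \<Upsilon> (Suc i). csmult (c \<sigma> \<theta>) (bdry \<Delta> i (elem \<sigma>)))"
  shows "\<forall>\<theta>\<in>cfaces \<Delta> (Suc i) - cfaces \<Upsilon> (Suc i).
           laplace \<Delta> i (elem \<theta> :: 'v set \<Rightarrow> int)
             = (\<Sum>\<sigma>\<in>cfaces \<Delta> (Suc i) - cfaces \<Upsilon> (Suc i).
                  csmult (laplace \<Delta> i (elem \<sigma>) \<theta>)
                    (elem \<sigma> - (\<Sum>\<rho>\<in>cfaces \<Upsilon> (Suc i). csmult (c \<rho> \<sigma>) (elem \<rho>))))"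
proof (intro ballI)
  fix \<theta> assume th: "\<theta> \<in> cfaces \<Delta> (Suc i) - cfaces \<Upsilon> (Suc i)"
  note X = assms(1)
  have ST: "\<Upsilon> \<subseteq> skel \<Delta> i" "hvan TYPE(int) \<Upsilon> (Suc i)"
    using assms(4) unfolding spanning_tree_def by auto
  have UD: "\<Upsilon> \<subseteq> \<Delta>" using ST unfolding skel_def by auto
  have sub: "cfaces \<Upsilon> (Suc i) \<subseteq> cfaces \<Delta> (Suc i)" "cfaces \<Upsilon> i \<subseteq> cfaces \<Delta> i"
    using UD unfolding cfaces_def by auto
  have finF: "finite (cfaces \<Delta> (Suc i))" using X unfolding simplicial_complex_def cfaces_def by auto
  have noup: "cfaces \<Upsilon> (Suc (Suc i)) = {}" using ST unfolding skel_def cfaces_def by auto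
  define x :: "'v set \<Rightarrow> int" where "x = laplace \<Delta> i (elem \<theta>)"
  have xsupp: "x \<tau> = 0" if "\<tau> \<notin> cfaces \<Delta> (Suc i)" for \<tau>
    using that by (simp add: x_def laplace_def bdry_def)
  have symm: "laplace \<Delta> i (elem \<sigma>) \<theta> = x \<sigma>" if "\<sigma> \<in> cfaces \<Delta> (Suc i) - cfaces \<Upsilon> (Suc i)" for \<sigma>
    using that th unfolding x_def by (simp add: lap_app finF mult.commute)
  define y :: "'v set \<Rightarrow> int" where "y = (\<Sum>\<sigma>\<in>cfaces \<Delta> (Suc i) - cfaces \<Upsilon> (Suc i).
                  csmult (x \<sigma>) (elem \<sigma> - (\<Sum>\<rho>\<in>cfaces \<Upsilon> (Suc i). csmult (c \<rho> \<sigma>) (elem \<rho>))))"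
  have rhs: "(\<Sum>\<sigma>\<in>cfaces \<Delta> (Suc i) - cfaces \<Upsilon> (Suc i).
                  csmult (laplace \<Delta> i (elem \<sigma>) \<theta>)
                    (elem \<sigma> - (\<Sum>\<rho>\<in>cfaces \<Upsilon> (Suc i). csmult (c \<rho> \<sigma>) (elem \<rho>)))) = y"
    unfolding y_def by (rule sum.cong) (auto simp: symm)
  define z where "z = x - y"
  have zsupp: "z \<tau> = 0" if "\<tau> \<notin> cfaces \<Upsilon> (Suc i)" for \<tau>
  proof -
    have inner: "(\<Sum>\<rho>\<in>cfaces \<Upsilon> (Suc i). c \<rho> \<sigma> * (if \<tau> = \<rho> then 1 else 0)) = 0" for \<sigma>
      using that by (intro sum.neutral) (auto simp: elem_def)
    have "y \<tau> = (\<Sum>\<sigma>\<in>cfaces \<Delta> (Suc i) - cfaces \<Upsilon> (Suc i). x \<sigma> * (if \<tau> = \<sigma> then 1 else 0))"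
      unfolding y_def by (simp add: sum_app csmult_app inner elem_def)
    also have "\<dots> = (if \<tau> \<in> cfaces \<Delta> (Suc i) - cfaces \<Upsilon> (Suc i) then x \<tau> else 0)"
      using finF by (simp add: sum_elem2)
    also have "\<dots> = x \<tau>" using that xsupp by auto
    finally show ?thesis by (simp add: z_def)
  qed
  have bx: "bdry \<Delta> i x = 0" unfolding x_def laplace_def by (rule bdry_bdry[OF X])
  have by0: "bdry \<Delta> i y = 0"
  proof -
    have "bdry \<Delta> i y = (\<Sum>\<sigma>\<in>cfaces \<Delta> (Suc i) - cfaces \<Upsilon> (Suc i).
                  csmult (x \<sigma>) (bdry \<Delta> i (elem \<sigma>) - (\<Sum>\<rho>\<in>cfaces \<Upsilon> (Suc i). csmult (c \<rho> \<sigma>) (bdry \<Delta> i (elem \<rho>)))))"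
      unfolding y_def by (simp add: bdry_sum bdry_smult bdry_diff)
    also have "\<dots> = (\<Sum>\<sigma>\<in>cfaces \<Delta> (Suc i) - cfaces \<Upsilon> (Suc i). csmult (x \<sigma>) 0)"
      by (rule sum.cong) (use assms(6) in auto)
    also have "\<dots> = 0" by (rule sum.neutral) (simp add: csmult_def fun_eq_iff)
    finally show ?thesis .
  qed
  have bz: "bdry \<Delta> i z = 0" unfolding z_def bdry_diff bx by0 by simp
  have bzU: "bdry \<Upsilon> i z = 0"
  proof
    fix \<tau>
    show "bdry \<Upsilon> i z \<tau> = 0 \<tau>"
    proof (cases "\<tau> \<in> cfaces \<Upsilon> i")
      case False then show ?thesis by (simp add: bdry_def)
    next
      case True
      have "bdry \<Upsilon> i z \<tau> = (\<Sum>\<sigma>\<in>cfaces \<Upsilon> (Suc i). z \<sigma> * incid \<sigma> \<tau>)"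
        using True by (simp add: bdry_def)
      also have "\<dots> = (\<Sum>\<sigma>\<in>cfaces \<Delta> (Suc i). z \<sigma> * incid \<sigma> \<tau>)"
        by (rule sum.mono_neutral_left) (use finF sub zsupp in auto)
      also have "\<dots> = bdry \<Delta> i z \<tau>" using True sub by (auto simp: bdry_def)
      also have "\<dots> = 0" using bz by simp
      finally show ?thesis by simp
    qed
  qed
  have "z \<in> cycles TYPE(int) \<Upsilon> (Suc i)"
    unfolding cycles_def chains_def using zsupp bzU by auto
  then have "z \<in> bnds TYPE(int) \<Upsilon> (Suc i)" using ST(2) unfolding hvan_def by auto
  then obtain w where w: "w \<in> chains TYPE(int) \<Upsilon> (Suc (Suc i))" "z = bdry \<Upsilon> (Suc i) w"
    unfolding bnds_def by auto
  have "z = 0" unfolding w(2) using noup by (auto simp: bdry_def fun_eq_iff)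
  then have "x = y" unfolding z_def by simp
  then show "laplace \<Delta> i (elem \<theta> :: 'v set \<Rightarrow> int)
             = (\<Sum>\<sigma>\<in>cfaces \<Delta> (Suc i) - cfaces \<Upsilon> (Suc i).
                  csmult (laplace \<Delta> i (elem \<sigma>) \<theta>)
                    (elem \<sigma> - (\<Sum>\<rho>\<in>cfaces \<Upsilon> (Suc i). csmult (c \<rho> \<sigma>) (elem \<rho>))))"
    unfolding rhs x_def by simp
qed

end
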